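(* Let $F_1,\dots,F_n:\mathbb{R}^d\to\mathbb{R}^d$ with each $F_i$ $L_i$-Lipschitz, $F=\frac1n\sum_iF_i$ monotone and $L$-Lipschitz, and $z_*$ with $F(z_* )=0$. If SEG-RR is run with extrapolation step size $\gamma_2\le\frac1L$ and update step size $\gamma_1>0$, then for every epoch $k$, with $\hat z_0^k=z_0^k-\gamma_2F(z_0^k)$, $$\|z_0^k-z_*-\gamma_1nF(\hat z_0^k)\|^2\le(1+4\gamma_1^2n^2L^2)\|z_0^k-z_*\|^2-\gamma_1\gamma_2n(1-\gamma_2^2L^2)\|F(z_0^k)\|^2.$$
   Context: $F$ monotone: $\langle F(z_1)-F(z_2),z_1-z_2\rangle\ge0$. SEG-RR with step sizes $\gamma_1,\gamma_2$: for each epoch $k$ draw a permutation $\pi^k$ of $\{1,\dots,n\}$ uniformly at random; for $i=0,\dots,n-1$ set $\bar z_i^k=z_i^k-\gamma_2F_{\pi_i^k}(z_i^k)$, $z_{i+1}^k=z_i^k-\gamma_1F_{\pi_i^k}(\bar z_i^k)$; then $z_0^{k+1}=z_n^k$. *)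

theory Defs
  imports "HOL-Analysis.Analysis" "HOL-Combinatorics.Permutations"
begin

text \<open>Inner loop of one SEG-RR epoch: components Fc 0..n-1, permutation p of {0..<n}.
  seg_inner Fc g1 g2 p z i is z_i^k when z = z_0^k.\<close>
fun seg_inner :: "(nat \<Rightarrow> 'a::real_normed_vector \<Rightarrow> 'a) \<Rightarrow> real \<Rightarrow> real \<Rightarrow> (nat \<Rightarrow> nat) \<Rightarrow> 'a \<Rightarrow> nat \<Rightarrow> 'a" where
  "seg_inner Fc g1 g2 p z 0 = z"
| "seg_inner Fc g1 g2 p z (Suc i) =
     (let w = seg_inner Fc g1 g2 p z i;
          wb = w - g2 *\<^sub>R Fc (p i) w
      in w - g1 *\<^sub>R Fc (p i) wb)"

fun seg_rr :: "(nat \<Rightarrow> 'a::real_normed_vector \<Rightarrow> 'a) \<Rightarrow> real \<Rightarrow> real \<Rightarrow> nat \<Rightarrow> (nat \<Rightarrow> nat \<Rightarrow> nat) \<Rightarrow> 'a \<Rightarrow> nat \<Rightarrow> 'a" where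
  "seg_rr Fc g1 g2 n P z0 0 = z0"
| "seg_rr Fc g1 g2 n P z0 (Suc k) = seg_inner Fc g1 g2 (P k) (seg_rr Fc g1 g2 n P z0 k) n"

end

theory Submission
  imports Defs
begin

theorem lemma8:
  fixes Fc :: "nat \<Rightarrow> 'a::euclidean_space \<Rightarrow> 'a"
    and F :: "'a \<Rightarrow> 'a"
    and Li :: "nat \<Rightarrow> real"
    and L \<gamma>1 \<gamma>2 :: real
    and n :: nat
    and P :: "nat \<Rightarrow> nat \<Rightarrow> nat"
    and z0 zs :: 'a
    and k :: nat
  assumes n_pos: "n \<ge> 1"
    and Fc_lip: "\<forall>i<n. (Li i)-lipschitz_on UNIV (Fc i)"
    and F_def: "F = (\<lambda>z. (1 / real n) *\<^sub>R (\<Sum>i<n. Fc i z))"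
    and F_mono: "\<forall>z1 z2. inner (F z1 - F z2) (z1 - z2) \<ge> 0"
    and F_lip: "L-lipschitz_on UNIV F"
    and L_pos: "L > 0"
    and zs_sol: "F zs = 0"
    and perms: "\<forall>j. P j permutes {0..<n}"
    and g2_pos: "\<gamma>2 > 0"
    and g2_le: "\<gamma>2 \<le> 1 / L"
    and g1_pos: "\<gamma>1 > 0"
  shows "let z = seg_rr Fc \<gamma>1 \<gamma>2 n P z0 k;
             zh = z - \<gamma>2 *\<^sub>R F z
         in (norm (z - zs - (\<gamma>1 * real n) *\<^sub>R F zh))\<^sup>2
            \<le> (1 + 4 * \<gamma>1\<^sup>2 * (real n)\<^sup>2 * L\<^sup>2) * (norm (z - zs))\<^sup>2
              - \<gamma>1 * \<gamma>2 * real n * (1 - \<gamma>2\<^sup>2 * L\<^sup>2) * (norm (F z))\<^sup>2"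
proof -
  define z where "z = seg_rr Fc \<gamma>1 \<gamma>2 n P z0 k"
  define zh where "zh = z - \<gamma>2 *\<^sub>R F z"
  define a where "a = \<gamma>1 * real n"
  define u where "u = z - zs"
  define x where "x = F z"
  define y where "y = F zh"
  have a_pos: "a > 0" using g1_pos n_pos by (simp add: a_def)
  have gL: "\<gamma>2 * L \<le> 1" using g2_le L_pos by (simp add: field_simps)
  have I1: "inner y (zh - zs) \<ge> 0" using F_mono zs_sol unfolding y_def by (metis diff_zero)
  have "dist (F zh) (F z) \<le> L * dist zh z" using lipschitz_onD[OF F_lip] by simp
  hence D1: "norm (y - x) \<le> L * (\<gamma>2 * norm x)" by (simp add: y_def x_def dist_norm zh_def abs_of_pos[OF g2_pos])
  have D: "(norm (y - x))\<^sup>2 \<le> \<gamma>2\<^sup>2 * L\<^sup>2 * (norm x)\<^sup>2"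
  proof -
    have "(norm (y - x))\<^sup>2 \<le> (L * (\<gamma>2 * norm x))\<^sup>2" using D1 by (intro power_mono) auto
    thus ?thesis by (simp add: power_mult_distrib mult.commute mult.left_commute)
  qed
  have "dist (F z) (F zs) \<le> L * dist z zs" using lipschitz_onD[OF F_lip] by simp
  hence X1: "norm x \<le> L * norm u" by (simp add: x_def u_def zs_sol dist_norm)
  have "dist (F zh) (F zs) \<le> L * dist zh zs" using lipschitz_onD[OF F_lip] by simp
  hence Y1: "norm y \<le> L * norm (zh - zs)" by (simp add: y_def zs_sol dist_norm)
  have "zh - zs = u - \<gamma>2 *\<^sub>R x" by (simp add: zh_def u_def x_def)
  hence "norm (zh - zs) \<le> norm u + \<gamma>2 * norm x" using norm_triangle_ineq4[of u "\<gamma>2 *\<^sub>R x"] g2_pos by simp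
  also have "\<dots> \<le> norm u + \<gamma>2 * (L * norm u)" using X1 g2_pos by (simp add: mult_left_mono)
  also have "\<dots> \<le> 2 * norm u"
  proof -
    have "(\<gamma>2 * L) * norm u \<le> 1 * norm u" using gL by (intro mult_right_mono) auto
    thus ?thesis by (simp add: mult.assoc)
  qed
  finally have Z: "norm (zh - zs) \<le> 2 * norm u" .
  have "L * norm (zh - zs) \<le> L * (2 * norm u)" using Z L_pos by (intro mult_left_mono) auto
  hence "norm y \<le> 2 * L * norm u" using Y1 by simp
  hence Y: "(norm y)\<^sup>2 \<le> 4 * L\<^sup>2 * (norm u)\<^sup>2"
    using power_mono[of "norm y" "2 * L * norm u" 2] by (simp add: power_mult_distrib)
  have E1: "(norm (u - a *\<^sub>R y))\<^sup>2 = (norm u)\<^sup>2 - 2 * a * inner u y + a\<^sup>2 * (norm y)\<^sup>2"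
    unfolding power2_norm_eq_inner by (simp add: inner_diff_left inner_diff_right inner_commute[of y u] power2_eq_square algebra_simps)
  have E2: "inner u y = inner y (zh - zs) + \<gamma>2 * inner x y"
    by (simp add: zh_def u_def x_def inner_diff_right inner_commute algebra_simps)
  have E3: "(norm (y - x))\<^sup>2 = (norm y)\<^sup>2 - 2 * inner x y + (norm x)\<^sup>2"
    unfolding power2_norm_eq_inner by (simp add: inner_diff_left inner_diff_right inner_commute[of y x])
  have P1: "a * inner y (zh - zs) \<ge> 0" using a_pos I1 by simp
  have P2: "a * \<gamma>2 * (norm (y - x))\<^sup>2 \<le> a * \<gamma>2 * (\<gamma>2\<^sup>2 * L\<^sup>2 * (norm x)\<^sup>2)"
    using D a_pos g2_pos by (intro mult_left_mono) auto
  have P3: "a\<^sup>2 * (norm y)\<^sup>2 \<le> a\<^sup>2 * (4 * L\<^sup>2 * (norm u)\<^sup>2)" using Y by (intro mult_left_mono) auto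
  have P4: "a * \<gamma>2 * (norm y)\<^sup>2 \<ge> 0" using a_pos g2_pos by simp
  have "(norm (u - a *\<^sub>R y))\<^sup>2 \<le> (1 + 4 * \<gamma>1\<^sup>2 * (real n)\<^sup>2 * L\<^sup>2) * (norm u)\<^sup>2
              - \<gamma>1 * \<gamma>2 * real n * (1 - \<gamma>2\<^sup>2 * L\<^sup>2) * (norm x)\<^sup>2"
  proof -
    have "(1 + 4 * \<gamma>1\<^sup>2 * (real n)\<^sup>2 * L\<^sup>2) * (norm u)\<^sup>2 - \<gamma>1 * \<gamma>2 * real n * (1 - \<gamma>2\<^sup>2 * L\<^sup>2) * (norm x)\<^sup>2
       = (norm u)\<^sup>2 + a\<^sup>2 * (4 * L\<^sup>2 * (norm u)\<^sup>2) - a * \<gamma>2 * (norm x)\<^sup>2 + a * \<gamma>2 * (\<gamma>2\<^sup>2 * L\<^sup>2 * (norm x)\<^sup>2)"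
      by (simp add: a_def algebra_simps power2_eq_square)
    moreover have "a * \<gamma>2 * (norm (y - x))\<^sup>2 = a * \<gamma>2 * (norm y)\<^sup>2 - 2 * a * \<gamma>2 * inner x y + a * \<gamma>2 * (norm x)\<^sup>2"
      unfolding E3 by (simp add: algebra_simps)
    moreover have "2 * a * inner u y = 2 * (a * inner y (zh - zs)) + 2 * a * \<gamma>2 * inner x y"
      unfolding E2 by (simp add: algebra_simps)
    ultimately show ?thesis using E1 P1 P2 P3 P4 by linarith
  qed
  moreover have "z - zs - (\<gamma>1 * real n) *\<^sub>R F zh = u - a *\<^sub>R y" by (simp add: u_def a_def y_def)
  ultimately have "(norm (z - zs - (\<gamma>1 * real n) *\<^sub>R F zh))\<^sup>2
            \<le> (1 + 4 * \<gamma>1\<^sup>2 * (real n)\<^sup>2 * L\<^sup>2) * (norm (z - zs))\<^sup>2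
              - \<gamma>1 * \<gamma>2 * real n * (1 - \<gamma>2\<^sup>2 * L\<^sup>2) * (norm (F z))\<^sup>2"
    by (simp only: u_def x_def)
  thus ?thesis unfolding Let_def z_def zh_def .
qed

end
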